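(* Let $\xi,\zeta$ be admissible families with $E[\operatorname{ess\,sup}_{\theta\in\mathcal T}(\xi(\theta))^-]<+\infty$, $E[\operatorname{ess\,sup}_{\theta\in\mathcal T}(\zeta(\theta))^+]<+\infty$ and $\xi(T)=\zeta(T)=0$ a.s., and let $J_n,J'_n$ ($n\in\mathbb N$) be defined by $J_0=J'_0=0$, $J_{n+1}(\theta)=\operatorname{ess\,sup}_{\tau\in\mathcal T_\theta}E[J'_n(\tau)+\xi(\tau)\mid\mathcal F_\theta]$, $J'_{n+1}(\theta)=\operatorname{ess\,sup}_{\sigma\in\mathcal T_\theta}E[J_n(\sigma)-\zeta(\sigma)\mid\mathcal F_\theta]$. Then the sequences $(J_n)_{n\in\mathbb N}$ and $(J'_n)_{n\in\mathbb N}$ are almost surely non-decreasing: for each $n$ and each $\theta\in\mathcal T$, $J_n(\theta)\le J_{n+1}(\theta)$ and $J'_n(\theta)\le J'_{n+1}(\theta)$ a.s.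
   Context: Filtered probability space $(\Omega,\mathcal F,(\mathcal F_t)_{0\le t\le T},P)$ satisfying the usual conditions, $\mathcal F=\mathcal F_T$, $\mathcal F_0$ trivial, $T\in(0,\infty)$. $\mathcal T$: stopping times valued in $[0,T]$; $\mathcal T_S=\{\theta\in\mathcal T:\theta\ge S\text{ a.s.}\}$. A family $\phi=(\phi(\theta),\theta\in\mathcal T)$ of $\overline{\mathbb R}$-valued random variables is admissible if each $\phi(\theta)$ is $\mathcal F_\theta$-measurable and $\phi(\theta)=\phi(\theta')$ a.s. on $\{\theta=\theta'\}$. *)

theory Defs
  imports "HOL-Probability.Probability"
begin

definition usual_filtered_space :: "'a measure \<Rightarrow> (real \<Rightarrow> 'a measure) \<Rightarrow> real \<Rightarrow> bool" where
  "usual_filtered_space M F T \<longleftrightarrow>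
     prob_space M \<and> 0 < T \<and>
     (\<forall>t\<in>{0..T}. subalgebra M (F t)) \<and>
     (\<forall>s t. 0 \<le> s \<and> s \<le> t \<and> t \<le> T \<longrightarrow> sets (F s) \<subseteq> sets (F t)) \<and>
     (\<forall>t\<in>{0..<T}. sets (F t) = (\<Inter>s\<in>{t<..T}. sets (F s))) \<and>
     (\<forall>N A. N \<in> null_sets M \<and> A \<subseteq> N \<longrightarrow> A \<in> sets (F 0)) \<and>
     sets (F T) = sets M \<and>
     (\<forall>A\<in>sets (F 0). measure M A = 0 \<or> measure M A = 1)"

definition stop_times :: "'a measure \<Rightarrow> (real \<Rightarrow> 'a measure) \<Rightarrow> real \<Rightarrow> ('a \<Rightarrow> real) set" where
  "stop_times M F T = {\<theta>. (\<forall>\<omega>\<in>space M. 0 \<le> \<theta> \<omega> \<and> \<theta> \<omega> \<le> T) \<and>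
      (\<forall>t\<in>{0..T}. {\<omega>\<in>space M. \<theta> \<omega> \<le> t} \<in> sets (F t))}"

definition stop_times_from :: "'a measure \<Rightarrow> (real \<Rightarrow> 'a measure) \<Rightarrow> real \<Rightarrow> ('a \<Rightarrow> real) \<Rightarrow> ('a \<Rightarrow> real) set" where
  "stop_times_from M F T S = {\<theta> \<in> stop_times M F T. AE \<omega> in M. S \<omega> \<le> \<theta> \<omega>}"

definition stop_sigma :: "'a measure \<Rightarrow> (real \<Rightarrow> 'a measure) \<Rightarrow> real \<Rightarrow> ('a \<Rightarrow> real) \<Rightarrow> 'a measure" where
  "stop_sigma M F T \<theta> = sigma (space M)
     {A \<in> sets M. \<forall>t\<in>{0..T}. {\<omega>\<in>A. \<theta> \<omega> \<le> t} \<in> sets (F t)}"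

definition admissible :: "'a measure \<Rightarrow> (real \<Rightarrow> 'a measure) \<Rightarrow> real \<Rightarrow> (('a \<Rightarrow> real) \<Rightarrow> 'a \<Rightarrow> ereal) \<Rightarrow> bool" where
  "admissible M F T \<phi> \<longleftrightarrow>
     (\<forall>\<theta>\<in>stop_times M F T. \<phi> \<theta> \<in> borel_measurable (stop_sigma M F T \<theta>)) \<and>
     (\<forall>\<theta>\<in>stop_times M F T. \<forall>\<theta>'\<in>stop_times M F T.
        AE \<omega> in M. \<theta> \<omega> = \<theta>' \<omega> \<longrightarrow> \<phi> \<theta> \<omega> = \<phi> \<theta>' \<omega>)"

definition is_esssup :: "'a measure \<Rightarrow> ('a \<Rightarrow> ereal) set \<Rightarrow> ('a \<Rightarrow> ereal) \<Rightarrow> bool" where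
  "is_esssup M Xs Z \<longleftrightarrow>
     Z \<in> borel_measurable M \<and>
     (\<forall>X\<in>Xs. AE \<omega> in M. X \<omega> \<le> Z \<omega>) \<and>
     (\<forall>W\<in>borel_measurable M. (\<forall>X\<in>Xs. AE \<omega> in M. X \<omega> \<le> W \<omega>) \<longrightarrow> (AE \<omega> in M. Z \<omega> \<le> W \<omega>))"

text \<open>Generalised conditional expectation of an extended-real random variable:
E[X^+ | G] - E[X^- | G] (well defined whenever one of the two parts is finite).\<close>
definition cond_exp_ereal :: "'a measure \<Rightarrow> 'a measure \<Rightarrow> ('a \<Rightarrow> ereal) \<Rightarrow> 'a \<Rightarrow> ereal" where
  "cond_exp_ereal M G X = (\<lambda>\<omega>.
     enn2ereal (nn_cond_exp M G (\<lambda>x. e2ennreal (X x)) \<omega>)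
     - enn2ereal (nn_cond_exp M G (\<lambda>x. e2ennreal (- X x)) \<omega>))"

end

theory Submission
  imports Defs
begin

lemma stop_sigma_subalg:
  "subalgebra M (stop_sigma M F T \<theta>)"
  unfolding subalgebra_def stop_sigma_def
  apply (rule conjI)
   apply (rule space_measure_of) apply (auto dest: sets.sets_into_space)[1]
  apply (subst sets_measure_of) apply (auto dest: sets.sets_into_space)[1]
  apply (rule sets.sigma_sets_subset) apply auto
  done

lemma cond_exp_mono:
  assumes "prob_space M" "subalgebra M G"
    and X: "X \<in> borel_measurable M" and Y: "Y \<in> borel_measurable M"
    and le: "AE x in M. X x \<le> Y x"
  shows "AE x in M. cond_exp_ereal M G X x \<le> cond_exp_ereal M G Y x"
proof -
  interpret finite_measure_subalgebra M G
    using assms unfolding finite_measure_subalgebra_def finite_measure_subalgebra_axioms_def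
    by (simp add: prob_space_def)
  have "AE x in M. nn_cond_exp M G (\<lambda>x. e2ennreal (X x)) x \<le> nn_cond_exp M G (\<lambda>x. e2ennreal (Y x)) x"
    by (rule nn_cond_exp_mono) (use le X Y in \<open>auto intro: e2ennreal_mono\<close>)
  moreover have "AE x in M. nn_cond_exp M G (\<lambda>x. e2ennreal (- Y x)) x \<le> nn_cond_exp M G (\<lambda>x. e2ennreal (- X x)) x"
    by (rule nn_cond_exp_mono) (use le X Y in \<open>auto intro!: e2ennreal_mono elim!: AE_mp\<close>)
  ultimately show ?thesis
    unfolding cond_exp_ereal_def
    by eventually_elim (auto intro!: ereal_minus_mono simp: less_eq_ennreal.rep_eq)
qed

lemma cond_exp_zero:
  assumes "prob_space M" "subalgebra M G"
  shows "AE x in M. cond_exp_ereal M G (\<lambda>_. 0) x = 0"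
proof -
  interpret finite_measure_subalgebra M G
    using assms unfolding finite_measure_subalgebra_def finite_measure_subalgebra_axioms_def
    by (simp add: prob_space_def)
  have "AE x in M. (\<lambda>_. 0) x = nn_cond_exp M G (\<lambda>_. 0) x"
    by (rule nn_cond_exp_F_meas) simp
  then show ?thesis unfolding cond_exp_ereal_def
    by eventually_elim (auto simp: zero_ennreal.rep_eq)
qed



lemma esssup_ub:
  assumes "is_esssup M Xs Z" "X \<in> Xs" shows "AE \<omega> in M. X \<omega> \<le> Z \<omega>"
proof -
  have h: "\<forall>X\<in>Xs. AE \<omega> in M. X \<omega> \<le> Z \<omega>" using assms(1) unfolding is_esssup_def by (elim conjE)
  show ?thesis using bspec[OF h assms(2)] .
qed

lemma esssup_meas: "is_esssup M Xs Z \<Longrightarrow> Z \<in> borel_measurable M"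
  unfolding is_esssup_def by (elim conjE)

lemma esssup_least:
  assumes "is_esssup M Xs Z" "W \<in> borel_measurable M"
    "\<And>X. X \<in> Xs \<Longrightarrow> AE \<omega> in M. X \<omega> \<le> W \<omega>"
  shows "AE \<omega> in M. Z \<omega> \<le> W \<omega>"
proof -
  have h: "\<forall>W\<in>borel_measurable M. (\<forall>X\<in>Xs. AE \<omega> in M. X \<omega> \<le> W \<omega>) \<longrightarrow> (AE \<omega> in M. Z \<omega> \<le> W \<omega>)"
    using assms(1) unfolding is_esssup_def by (elim conjE)
  have "\<forall>X\<in>Xs. AE \<omega> in M. X \<omega> \<le> W \<omega>" using assms(3) by (rule ballI)
  then show ?thesis using h assms(2) by (rule_tac mp[OF bspec[OF h assms(2)]])
qed

lemma ufs_P: "usual_filtered_space M F T \<Longrightarrow> prob_space M"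
  unfolding usual_filtered_space_def by (elim conjE)
lemma ufs_T: "usual_filtered_space M F T \<Longrightarrow> 0 < T"
  unfolding usual_filtered_space_def by (elim conjE)
lemma ufs_sub: "usual_filtered_space M F T \<Longrightarrow> t \<in> {0..T} \<Longrightarrow> subalgebra M (F t)"
  unfolding usual_filtered_space_def by (elim conjE) (erule bspec)

lemma stop_T:
  assumes "usual_filtered_space M F T" "\<theta> \<in> stop_times M F T"
  shows "(\<lambda>_. T) \<in> stop_times_from M F T \<theta>"
proof -
  have T: "0 < T" by (rule ufs_T[OF assms(1)])
  have A: "{\<omega>\<in>space M. T \<le> t} \<in> sets (F t)" if "t \<in> {0..T}" for t
  proof (cases "T \<le> t")
    case True
    have "subalgebra M (F t)" by (rule ufs_sub[OF assms(1) that])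
    then have "{\<omega>\<in>space M. T \<le> t} = space (F t)" using True by (auto simp: subalgebra_def)
    then show ?thesis by simp
  next
    case False then show ?thesis by simp
  qed
  have B: "AE \<omega> in M. \<theta> \<omega> \<le> T" using assms(2) unfolding stop_times_def by (intro AE_I2) blast
  show ?thesis
    unfolding stop_times_from_def stop_times_def
    apply (intro CollectI conjI ballI)
       apply (use T in simp)
      apply simp
     apply (erule A)
    apply (rule B)
    done
qed

lemma adm_meas:
  assumes "admissible M F T \<phi>" "\<theta> \<in> stop_times M F T"
  shows "\<phi> \<theta> \<in> borel_measurable M"
proof -
  have h: "\<forall>\<theta>\<in>stop_times M F T. \<phi> \<theta> \<in> borel_measurable (stop_sigma M F T \<theta>)"
    using assms(1) unfolding admissible_def by (elim conjE)
  show ?thesis by (rule measurable_from_subalg[OF stop_sigma_subalg bspec[OF h assms(2)]])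
qed

theorem lemma2p2:
  fixes M :: "'a measure" and F :: "real \<Rightarrow> 'a measure" and T :: real
    and \<xi> \<zeta> :: "('a \<Rightarrow> real) \<Rightarrow> 'a \<Rightarrow> ereal"
    and J J' :: "nat \<Rightarrow> ('a \<Rightarrow> real) \<Rightarrow> 'a \<Rightarrow> ereal"
  assumes space: "usual_filtered_space M F T"
    and adm_xi: "admissible M F T \<xi>"
    and adm_zeta: "admissible M F T \<zeta>"
    and int_xi: "\<exists>Z. is_esssup M {(\<lambda>\<omega>. max 0 (- \<xi> \<theta> \<omega>)) | \<theta>. \<theta> \<in> stop_times M F T} Z
                     \<and> (\<integral>\<^sup>+ \<omega>. e2ennreal (Z \<omega>) \<partial>M) < \<infinity>"
    and int_zeta: "\<exists>Z. is_esssup M {(\<lambda>\<omega>. max 0 (\<zeta> \<theta> \<omega>)) | \<theta>. \<theta> \<in> stop_times M F T} Z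
                     \<and> (\<integral>\<^sup>+ \<omega>. e2ennreal (Z \<omega>) \<partial>M) < \<infinity>"
    and xi_T: "AE \<omega> in M. \<xi> (\<lambda>_. T) \<omega> = 0"
    and zeta_T: "AE \<omega> in M. \<zeta> (\<lambda>_. T) \<omega> = 0"
    and J0: "\<And>\<theta>. J 0 \<theta> = (\<lambda>_. 0)"
    and J'0: "\<And>\<theta>. J' 0 \<theta> = (\<lambda>_. 0)"
    and J_Suc: "\<And>n \<theta>. \<theta> \<in> stop_times M F T \<Longrightarrow>
       is_esssup M {cond_exp_ereal M (stop_sigma M F T \<theta>) (\<lambda>\<omega>. J' n \<tau> \<omega> + \<xi> \<tau> \<omega>)
                    | \<tau>. \<tau> \<in> stop_times_from M F T \<theta>} (J (Suc n) \<theta>)"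
    and J'_Suc: "\<And>n \<theta>. \<theta> \<in> stop_times M F T \<Longrightarrow>
       is_esssup M {cond_exp_ereal M (stop_sigma M F T \<theta>) (\<lambda>\<omega>. J n \<sigma> \<omega> - \<zeta> \<sigma> \<omega>)
                    | \<sigma>. \<sigma> \<in> stop_times_from M F T \<theta>} (J' (Suc n) \<theta>)"
  shows "\<forall>n. \<forall>\<theta>\<in>stop_times M F T.
           (AE \<omega> in M. J n \<theta> \<omega> \<le> J (Suc n) \<theta> \<omega>) \<and>
           (AE \<omega> in M. J' n \<theta> \<omega> \<le> J' (Suc n) \<theta> \<omega>)"
proof -
  have P: "prob_space M" using ufs_P[OF space] .
  note sub = stop_sigma_subalg[of M F T]
  have Jm: "J n \<theta> \<in> borel_measurable M" if "\<theta> \<in> stop_times M F T" for n \<theta>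
  proof (cases n)
    case 0 then show ?thesis by (simp add: J0)
  next
    case (Suc m) then show ?thesis using esssup_meas[OF J_Suc[OF that, of m]] by simp
  qed
  have J'm: "J' n \<theta> \<in> borel_measurable M" if "\<theta> \<in> stop_times M F T" for n \<theta>
  proof (cases n)
    case 0 then show ?thesis by (simp add: J'0)
  next
    case (Suc m) then show ?thesis using esssup_meas[OF J'_Suc[OF that, of m]] by simp
  qed
  have stT: "(\<lambda>_. T) \<in> stop_times M F T" if "\<theta> \<in> stop_times M F T" for \<theta>
    using stop_T[OF space that] unfolding stop_times_from_def by auto
  show ?thesis
  proof
    fix n show "\<forall>\<theta>\<in>stop_times M F T.
           (AE \<omega> in M. J n \<theta> \<omega> \<le> J (Suc n) \<theta> \<omega>) \<and>
           (AE \<omega> in M. J' n \<theta> \<omega> \<le> J' (Suc n) \<theta> \<omega>)"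
    proof (induction n)
      case 0
      show ?case
      proof (intro ballI conjI)
        fix \<theta> assume th: "\<theta> \<in> stop_times M F T"
        have tT: "(\<lambda>_. T) \<in> stop_times_from M F T \<theta>" by (rule stop_T[OF space th])
        have a1: "AE \<omega> in M. cond_exp_ereal M (stop_sigma M F T \<theta>) (\<lambda>_. 0) \<omega>
               \<le> cond_exp_ereal M (stop_sigma M F T \<theta>) (\<lambda>\<omega>. J' 0 (\<lambda>_. T) \<omega> + \<xi> (\<lambda>_. T) \<omega>) \<omega>"
          apply (rule cond_exp_mono[OF P sub])
            apply simp
           apply (use adm_meas[OF adm_xi stT[OF th]] in \<open>simp add: J'0\<close>)
          using xi_T by eventually_elim (simp add: J'0)
        have a2: "AE \<omega> in M. cond_exp_ereal M (stop_sigma M F T \<theta>) (\<lambda>\<omega>. J' 0 (\<lambda>_. T) \<omega> + \<xi> (\<lambda>_. T) \<omega>) \<omega> \<le> J (Suc 0) \<theta> \<omega>"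
          by (rule esssup_ub[OF J_Suc[OF th, of 0]]) (use tT in blast)
        show "AE \<omega> in M. J 0 \<theta> \<omega> \<le> J (Suc 0) \<theta> \<omega>"
          using a1 a2 cond_exp_zero[OF P sub[of \<theta>]] unfolding J0 by eventually_elim (metis order_trans)
        have b1: "AE \<omega> in M. cond_exp_ereal M (stop_sigma M F T \<theta>) (\<lambda>_. 0) \<omega>
               \<le> cond_exp_ereal M (stop_sigma M F T \<theta>) (\<lambda>\<omega>. J 0 (\<lambda>_. T) \<omega> - \<zeta> (\<lambda>_. T) \<omega>) \<omega>"
          apply (rule cond_exp_mono[OF P sub])
            apply simp
           apply (use adm_meas[OF adm_zeta stT[OF th]] in \<open>simp add: J0\<close>)
          using zeta_T by eventually_elim (simp add: J0)
        have b2: "AE \<omega> in M. cond_exp_ereal M (stop_sigma M F T \<theta>) (\<lambda>\<omega>. J 0 (\<lambda>_. T) \<omega> - \<zeta> (\<lambda>_. T) \<omega>) \<omega> \<le> J' (Suc 0) \<theta> \<omega>"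
          by (rule esssup_ub[OF J'_Suc[OF th, of 0]]) (use tT in blast)
        show "AE \<omega> in M. J' 0 \<theta> \<omega> \<le> J' (Suc 0) \<theta> \<omega>"
          using b1 b2 cond_exp_zero[OF P sub[of \<theta>]] unfolding J'0 by eventually_elim (metis order_trans)
      qed
    next
      case (Suc n)
      show ?case
      proof (intro ballI conjI)
        fix \<theta> assume th: "\<theta> \<in> stop_times M F T"
        have "\<forall>X\<in>{cond_exp_ereal M (stop_sigma M F T \<theta>) (\<lambda>\<omega>. J' n \<tau> \<omega> + \<xi> \<tau> \<omega>)
                    | \<tau>. \<tau> \<in> stop_times_from M F T \<theta>}. AE \<omega> in M. X \<omega> \<le> J (Suc (Suc n)) \<theta> \<omega>"
        proof safe
          fix \<tau> assume tau: "\<tau> \<in> stop_times_from M F T \<theta>"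
          then have tau': "\<tau> \<in> stop_times M F T" unfolding stop_times_from_def by auto
          have mono: "AE \<omega> in M. J' n \<tau> \<omega> \<le> J' (Suc n) \<tau> \<omega>" using Suc.IH tau' by blast
          have a1: "AE \<omega> in M. cond_exp_ereal M (stop_sigma M F T \<theta>) (\<lambda>\<omega>. J' n \<tau> \<omega> + \<xi> \<tau> \<omega>) \<omega>
               \<le> cond_exp_ereal M (stop_sigma M F T \<theta>) (\<lambda>\<omega>. J' (Suc n) \<tau> \<omega> + \<xi> \<tau> \<omega>) \<omega>"
            apply (rule cond_exp_mono[OF P sub])
              apply (rule borel_measurable_ereal_add[OF J'm[OF tau'] adm_meas[OF adm_xi tau']])
             apply (rule borel_measurable_ereal_add[OF J'm[OF tau'] adm_meas[OF adm_xi tau']])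
            using mono by eventually_elim (rule add_right_mono)
          have a2: "AE \<omega> in M. cond_exp_ereal M (stop_sigma M F T \<theta>) (\<lambda>\<omega>. J' (Suc n) \<tau> \<omega> + \<xi> \<tau> \<omega>) \<omega> \<le> J (Suc (Suc n)) \<theta> \<omega>"
            by (rule esssup_ub[OF J_Suc[OF th, of "Suc n"]]) (use tau in blast)
          show "AE \<omega> in M. cond_exp_ereal M (stop_sigma M F T \<theta>) (\<lambda>\<omega>. J' n \<tau> \<omega> + \<xi> \<tau> \<omega>) \<omega> \<le> J (Suc (Suc n)) \<theta> \<omega>"
            using a1 a2 by eventually_elim (rule order_trans)
        qed
        then show "AE \<omega> in M. J (Suc n) \<theta> \<omega> \<le> J (Suc (Suc n)) \<theta> \<omega>"
          using esssup_least[OF J_Suc[OF th, of n] Jm[OF th, of "Suc (Suc n)"]] by blast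
        have "\<forall>X\<in>{cond_exp_ereal M (stop_sigma M F T \<theta>) (\<lambda>\<omega>. J n \<tau> \<omega> - \<zeta> \<tau> \<omega>)
                    | \<tau>. \<tau> \<in> stop_times_from M F T \<theta>}. AE \<omega> in M. X \<omega> \<le> J' (Suc (Suc n)) \<theta> \<omega>"
        proof safe
          fix \<tau> assume tau: "\<tau> \<in> stop_times_from M F T \<theta>"
          then have tau': "\<tau> \<in> stop_times M F T" unfolding stop_times_from_def by auto
          have mono: "AE \<omega> in M. J n \<tau> \<omega> \<le> J (Suc n) \<tau> \<omega>" using Suc.IH tau' by blast
          have a1: "AE \<omega> in M. cond_exp_ereal M (stop_sigma M F T \<theta>) (\<lambda>\<omega>. J n \<tau> \<omega> - \<zeta> \<tau> \<omega>) \<omega>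
               \<le> cond_exp_ereal M (stop_sigma M F T \<theta>) (\<lambda>\<omega>. J (Suc n) \<tau> \<omega> - \<zeta> \<tau> \<omega>) \<omega>"
            apply (rule cond_exp_mono[OF P sub])
              apply (rule borel_measurable_ereal_diff[OF Jm[OF tau'] adm_meas[OF adm_zeta tau']])
             apply (rule borel_measurable_ereal_diff[OF Jm[OF tau'] adm_meas[OF adm_zeta tau']])
            using mono by eventually_elim (rule ereal_minus_mono, auto)
          have a2: "AE \<omega> in M. cond_exp_ereal M (stop_sigma M F T \<theta>) (\<lambda>\<omega>. J (Suc n) \<tau> \<omega> - \<zeta> \<tau> \<omega>) \<omega> \<le> J' (Suc (Suc n)) \<theta> \<omega>"
            by (rule esssup_ub[OF J'_Suc[OF th, of "Suc n"]]) (use tau in blast)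
          show "AE \<omega> in M. cond_exp_ereal M (stop_sigma M F T \<theta>) (\<lambda>\<omega>. J n \<tau> \<omega> - \<zeta> \<tau> \<omega>) \<omega> \<le> J' (Suc (Suc n)) \<theta> \<omega>"
            using a1 a2 by eventually_elim (rule order_trans)
        qed
        then show "AE \<omega> in M. J' (Suc n) \<theta> \<omega> \<le> J' (Suc (Suc n)) \<theta> \<omega>"
          using esssup_least[OF J'_Suc[OF th, of n] J'm[OF th, of "Suc (Suc n)"]] by blast
      qed
    qed
  qed
qed

end
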